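(* Let $G=(V,E)$ be a graph with $n=|V|$ and $m=|E|$, and let $k$ be a positive integer. Construct $G'=(V',E')$ as follows: replace each vertex $u\in V$ by a path $u_1u_2u_3$; for each edge $e=uv\in E$ add four new vertices $e_u,e_v,e_w,e_z$ with edges $e_ue_v,e_ve_w,e_we_u,e_we_z$, and add the edges $u_3e_u$ and $v_3e_v$. Let $M=\{u_2u_3:u\in V\}\cup\{e_ue_w:e=uv\in E\}$ (choosing, for each edge $e$, one fixed endpoint labelled $u$). Then $M$ is a maximal matching of $G'$ with $|M|=n+m$, and $G$ has an independent set of at least $k$ vertices (equivalently a vertex cover of at most $n-k$ vertices) if and only if $G'$ has a vertex cover with at most $2|M|-k=2n+2m-k$ vertices.
   Context: A vertex cover of a graph is a set of vertices containing at least one endpoint of every edge. A matching is maximal if no edge of the graph can be added to it while keeping it a matching. *)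

theory Defs
  imports Main
begin

definition graph :: "'v set \<Rightarrow> 'v set set \<Rightarrow> bool" where
  "graph V E \<longleftrightarrow> finite V \<and> (\<forall>e\<in>E. \<exists>x y. x \<noteq> y \<and> x \<in> V \<and> y \<in> V \<and> e = {x, y})"

definition vertex_cover :: "'v set \<Rightarrow> 'v set set \<Rightarrow> 'v set \<Rightarrow> bool" where
  "vertex_cover V E C \<longleftrightarrow> C \<subseteq> V \<and> (\<forall>e\<in>E. e \<inter> C \<noteq> {})"

definition independent_set :: "'v set \<Rightarrow> 'v set set \<Rightarrow> 'v set \<Rightarrow> bool" where
  "independent_set V E S \<longleftrightarrow> S \<subseteq> V \<and> (\<forall>e\<in>E. \<not> e \<subseteq> S)"

definition matching :: "'v set set \<Rightarrow> 'v set set \<Rightarrow> bool" where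
  "matching E M \<longleftrightarrow> M \<subseteq> E \<and> (\<forall>e1\<in>M. \<forall>e2\<in>M. e1 \<noteq> e2 \<longrightarrow> e1 \<inter> e2 = {})"

definition maximal_matching :: "'v set set \<Rightarrow> 'v set set \<Rightarrow> bool" where
  "maximal_matching E M \<longleftrightarrow> matching E M \<and> (\<forall>e\<in>E - M. \<not> matching E (insert e M))"

text \<open>Vertices of the constructed graph G'.
  PV u i is u_i (i = 1,2,3);
  EVx e x is the gadget vertex e_x attached to x_3 (x an endpoint of e);
  EW e and EZ e are e_w and e_z.\<close>

datatype 'a gvert = PV 'a nat | EVx "'a set" 'a | EW "'a set" | EZ "'a set"

definition red_vertices :: "'a set \<Rightarrow> 'a set set \<Rightarrow> 'a gvert set" where
  "red_vertices V E =
     {PV u i | u i. u \<in> V \<and> i \<in> {1, 2, 3}}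
   \<union> {EVx e x | e x. e \<in> E \<and> x \<in> e}
   \<union> {EW e | e. e \<in> E}
   \<union> {EZ e | e. e \<in> E}"

definition red_edges :: "'a set \<Rightarrow> 'a set set \<Rightarrow> 'a gvert set set" where
  "red_edges V E =
     {{PV u 1, PV u 2} | u. u \<in> V}
   \<union> {{PV u 2, PV u 3} | u. u \<in> V}
   \<union> {{EVx e x, EVx e y} | e x y. e \<in> E \<and> x \<noteq> y \<and> e = {x, y}}
   \<union> {{EVx e x, EW e} | e x. e \<in> E \<and> x \<in> e}
   \<union> {{EW e, EZ e} | e. e \<in> E}
   \<union> {{PV x 3, EVx e x} | e x. e \<in> E \<and> x \<in> e}"

text \<open>The matching M, where t e is the fixed chosen endpoint (labelled u) of edge e.\<close>

definition red_matching :: "'a set \<Rightarrow> 'a set set \<Rightarrow> ('a set \<Rightarrow> 'a) \<Rightarrow> 'a gvert set set" where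
  "red_matching V E t =
     {{PV u 2, PV u 3} | u. u \<in> V} \<union> {{EVx e (t e), EW e} | e. e \<in> E}"

end

theory Submission
  imports Defs
begin

lemma graph_facts:
  assumes "graph V E"
  shows "finite V" "E \<subseteq> Pow V" "finite E"
    "\<And>e. e \<in> E \<Longrightarrow> \<exists>x y. x \<noteq> y \<and> x \<in> V \<and> y \<in> V \<and> e = {x, y}"
proof -
  show fV: "finite V" using assms unfolding graph_def by (rule conjunct1)
  have ed: "\<And>e. e \<in> E \<Longrightarrow> \<exists>x y. x \<noteq> y \<and> x \<in> V \<and> y \<in> V \<and> e = {x, y}"
    using assms unfolding graph_def by blast
  then show "\<And>e. e \<in> E \<Longrightarrow> \<exists>x y. x \<noteq> y \<and> x \<in> V \<and> y \<in> V \<and> e = {x, y}" .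
  show sub: "E \<subseteq> Pow V"
  proof
    fix e assume "e \<in> E" then obtain x y where "x \<in> V" "y \<in> V" "e = {x,y}" using ed by blast
    then show "e \<in> Pow V" by simp
  qed
  show "finite E" using finite_subset[OF sub] fV by simp
qed
lemma part1:
  assumes "graph V E" "\<forall>e\<in>E. t e \<in> e"
  shows "maximal_matching (red_edges V E) (red_matching V E t)"
proof -
  have edg: "\<And>e. e \<in> E \<Longrightarrow> \<exists>x y. x \<noteq> y \<and> x \<in> V \<and> y \<in> V \<and> e = {x, y}"
    using graph_facts(4)[OF assms(1)] by blast
  have sub: "red_matching V E t \<subseteq> red_edges V E"
  proof
    fix f assume "f \<in> red_matching V E t"
    then consider (a) u where "u \<in> V" "f = {PV u 2, PV u 3}"
      | (b) e where "e \<in> E" "f = {EVx e (t e), EW e}" unfolding red_matching_def by blast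
    then show "f \<in> red_edges V E"
    proof cases
      case a then show ?thesis unfolding red_edges_def by blast
    next
      case b then have "t e \<in> e" using assms(2) by blast
      then show ?thesis using b unfolding red_edges_def by blast
    qed
  qed
  have dis: "f1 \<inter> f2 = {}" if "f1 \<in> red_matching V E t" "f2 \<in> red_matching V E t" "f1 \<noteq> f2" for f1 f2
  proof -
    have c1: "(\<exists>u. f1 = {PV u 2, PV u 3}) \<or> (\<exists>e. f1 = {EVx e (t e), EW e})"
      using that(1) unfolding red_matching_def by blast
    have c2: "(\<exists>u. f2 = {PV u 2, PV u 3}) \<or> (\<exists>e. f2 = {EVx e (t e), EW e})"
      using that(2) unfolding red_matching_def by blast
    show ?thesis
    proof (cases "\<exists>u. f1 = {PV u 2, PV u 3}")
      case True
      then obtain u where u: "f1 = {PV u 2, PV u 3}" by blast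
      show ?thesis
      proof (cases "\<exists>u. f2 = {PV u 2, PV u 3}")
        case True
        then obtain v where v: "f2 = {PV v 2, PV v 3}" by blast
        have "u \<noteq> v" using u v that(3) by blast
        then show ?thesis using u v by simp
      next
        case False
        then obtain e where e: "f2 = {EVx e (t e), EW e}" using c2 by blast
        show ?thesis using u e by simp
      qed
    next
      case False
      then obtain e where e: "f1 = {EVx e (t e), EW e}" using c1 by blast
      show ?thesis
      proof (cases "\<exists>u. f2 = {PV u 2, PV u 3}")
        case True
        then obtain v where v: "f2 = {PV v 2, PV v 3}" by blast
        show ?thesis using v e by simp
      next
        case False
        then obtain d where d: "f2 = {EVx d (t d), EW d}" using c2 by blast
        have "e \<noteq> d" using d e that(3) by blast
        then show ?thesis using e d by simp
      qed
    qed
  qed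
  have m: "matching (red_edges V E) (red_matching V E t)"
    unfolding matching_def using sub dis by blast
  have "\<not> matching (red_edges V E) (insert f (red_matching V E t))"
    if f: "f \<in> red_edges V E - red_matching V E t" for f
  proof -
    have "\<exists>g\<in>red_matching V E t. g \<noteq> f \<and> g \<inter> f \<noteq> {}"
    proof -
      from f have "f \<in> red_edges V E" by blast
      then consider
        (a) u where "u \<in> V" "f = {PV u 1, PV u 2}"
      | (b) u where "u \<in> V" "f = {PV u 2, PV u 3}"
      | (c) e x y where "e \<in> E" "x \<noteq> y" "e = {x,y}" "f = {EVx e x, EVx e y}"
      | (d) e x where "e \<in> E" "x \<in> e" "f = {EVx e x, EW e}"
      | (e) e where "e \<in> E" "f = {EW e, EZ e}"
      | (g) e x where "e \<in> E" "x \<in> e" "f = {PV x 3, EVx e x}"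
        unfolding red_edges_def by blast
      then show ?thesis
      proof cases
        case a
        have "{PV u 2, PV u 3} \<in> red_matching V E t" using a unfolding red_matching_def by blast
        moreover have "PV u 3 \<notin> f" "PV u 2 \<in> f" using a by simp_all
        ultimately show ?thesis by (intro bexI[of _ "{PV u 2, PV u 3}"]) blast+
      next
        case b
        then have "f \<in> red_matching V E t" unfolding red_matching_def by blast
        then show ?thesis using f by blast
      next
        case c
        have "{EVx e (t e), EW e} \<in> red_matching V E t" using c unfolding red_matching_def by blast
        moreover have "t e \<in> {x,y}" using c assms(2) by blast
        moreover have "EW e \<notin> f" "EVx e (t e) \<in> f" using c \<open>t e \<in> {x,y}\<close> by auto
        ultimately show ?thesis by (intro bexI[of _ "{EVx e (t e), EW e}"]) blast+
      next
        case d
        have "{EVx e (t e), EW e} \<in> red_matching V E t" using d unfolding red_matching_def by blast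
        moreover have "f \<notin> red_matching V E t" using f by blast
        moreover have "EW e \<in> f" using d by simp
        ultimately show ?thesis by (intro bexI[of _ "{EVx e (t e), EW e}"]) blast+
      next
        case e
        have "{EVx e (t e), EW e} \<in> red_matching V E t" using e unfolding red_matching_def by blast
        moreover have "EVx e (t e) \<notin> f" "EW e \<in> f" using e by simp_all
        ultimately show ?thesis by (intro bexI[of _ "{EVx e (t e), EW e}"]) blast+
      next
        case g
        then have "x \<in> V" using edg by blast
        then have "{PV x 2, PV x 3} \<in> red_matching V E t" unfolding red_matching_def by blast
        moreover have "PV x 2 \<notin> f" "PV x 3 \<in> f" using g by simp_all
        ultimately show ?thesis by (intro bexI[of _ "{PV x 2, PV x 3}"]) blast+
      qed
    qed
    then show ?thesis unfolding matching_def by blast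
  qed
  then show ?thesis using m unfolding maximal_matching_def by blast
qed

lemma part2:
  assumes "graph V E" "\<forall>e\<in>E. t e \<in> e"
  shows "card (red_matching V E t) = card V + card E"
proof -
  have fV: "finite V" and fE: "finite E" using graph_facts[OF assms(1)] by auto
  have eq: "red_matching V E t = (\<lambda>u. {PV u 2, PV u 3}) ` V \<union> (\<lambda>e. {EVx e (t e), EW e}) ` E"
    unfolding red_matching_def by blast
  have i1: "inj_on (\<lambda>u. {PV u 2, PV u 3}) V"
    by (rule inj_onI) (auto simp: doubleton_eq_iff)
  have i2: "inj_on (\<lambda>e. {EVx e (t e), EW e}) E"
    by (rule inj_onI) (auto simp: doubleton_eq_iff)
  have d: "(\<lambda>u. {PV u 2, PV u 3}) ` V \<inter> (\<lambda>e. {EVx e (t e), EW e}) ` E = {}"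
    by (auto simp: doubleton_eq_iff)
  show ?thesis unfolding eq
    using card_Un_disjoint[OF finite_imageI[OF fV] finite_imageI[OF fE] d]
      card_image[OF i1] card_image[OF i2] by simp
qed

lemma part3:
  assumes "graph V E"
  shows "(\<exists>S. independent_set V E S \<and> card S \<ge> k)
            \<longleftrightarrow> (\<exists>C. vertex_cover V E C \<and> int (card C) \<le> int (card V) - int k)"
proof
  have fV: "finite V" and sub: "E \<subseteq> Pow V" using graph_facts[OF assms(1)] by auto
  assume "\<exists>S. independent_set V E S \<and> card S \<ge> k"
  then obtain S where S: "independent_set V E S" "card S \<ge> k" by blast
  have "vertex_cover V E (V - S)" using S(1) sub unfolding independent_set_def vertex_cover_def
    by blast
  moreover have "card (V - S) = card V - card S" using S(1) fV
    by (meson card_Diff_subset finite_subset independent_set_def)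
  moreover have "card S \<le> card V" using S(1) fV
    by (simp add: card_mono independent_set_def)
  ultimately show "\<exists>C. vertex_cover V E C \<and> int (card C) \<le> int (card V) - int k"
    using S(2) by (intro exI[of _ "V - S"]) auto
next
  have fV: "finite V" and sub: "E \<subseteq> Pow V" using graph_facts[OF assms(1)] by auto
  assume "\<exists>C. vertex_cover V E C \<and> int (card C) \<le> int (card V) - int k"
  then obtain C where C: "vertex_cover V E C" "int (card C) \<le> int (card V) - int k" by blast
  have "independent_set V E (V - C)" using C(1) sub unfolding independent_set_def vertex_cover_def
    by blast
  moreover have "card (V - C) = card V - card C" using C(1) fV
    by (meson card_Diff_subset finite_subset vertex_cover_def)
  ultimately show "\<exists>S. independent_set V E S \<and> card S \<ge> k"
    using C(2) by (intro exI[of _ "V - C"]) auto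
qed

lemma two_ex: "x \<noteq> y \<Longrightarrow> e = {x,y} \<Longrightarrow> a \<in> e \<Longrightarrow> \<exists>z. z \<in> e \<and> z \<noteq> a"
  by blast
lemma two_all: "x \<noteq> y \<Longrightarrow> e = {x,y} \<Longrightarrow> a \<in> e \<Longrightarrow> b \<in> e \<Longrightarrow> b \<noteq> a \<Longrightarrow> \<forall>z\<in>e. z = a \<or> z = b"
  by blast

lemma part4a:
  assumes "graph V E" "\<forall>e\<in>E. t e \<in> e" "vertex_cover V E C"
    and "int (card C) \<le> int (card V) - int k"
  shows "\<exists>C'. vertex_cover (red_vertices V E) (red_edges V E) C'
           \<and> int (card C') \<le> 2 * int (card V + card E) - int k"
proof -
  have fV: "finite V" and fE: "finite E" and sub: "E \<subseteq> Pow V" using graph_facts[OF assms(1)] by auto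
  have edg: "\<And>e. e \<in> E \<Longrightarrow> \<exists>x y. x \<noteq> y \<and> x \<in> V \<and> y \<in> V \<and> e = {x, y}"
    using graph_facts(4)[OF assms(1)] by blast
  have CV: "C \<subseteq> V" and Ccov: "\<forall>e\<in>E. e \<inter> C \<noteq> {}" using assms(3) unfolding vertex_cover_def by auto
  have fC: "finite C" using finite_subset[OF CV fV] .
  define oth where "oth e = (SOME y. y \<in> e \<and> y \<noteq> t e)" for e
  define s where "s e = (if t e \<in> C then oth e else t e)" for e
  have ofacts: "oth e \<in> e \<and> oth e \<noteq> t e \<and> (\<forall>z\<in>e. z = t e \<or> z = oth e)" if eE: "e \<in> E" for e
  proof -
    obtain x y where xy: "x \<noteq> y" "e = {x,y}" using edg[OF eE] by blast
    have te: "t e \<in> e" using assms(2) eE by blast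
    have "\<exists>y. y \<in> e \<and> y \<noteq> t e" using two_ex[OF xy te] .
    then have o1: "oth e \<in> e \<and> oth e \<noteq> t e" unfolding oth_def by (rule someI_ex)
    then show ?thesis using two_all[OF xy te, of "oth e"] by blast
  qed
  have sfacts: "s e \<in> e \<and> (\<forall>z\<in>e. z \<noteq> s e \<longrightarrow> z \<in> C)" if eE: "e \<in> E" for e
  proof -
    have te: "t e \<in> e" using assms(2) eE by blast
    have ne: "e \<inter> C \<noteq> {}" using Ccov eE by blast
    have of: "oth e \<in> e" "oth e \<noteq> t e" "\<forall>z\<in>e. z = t e \<or> z = oth e" using ofacts[OF eE] by auto
    show ?thesis
    proof (cases "t e \<in> C")
      case True
      then have "s e = oth e" unfolding s_def by simp
      moreover have "\<forall>z\<in>e. z \<noteq> oth e \<longrightarrow> z \<in> C"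
      proof (intro ballI impI)
        fix z assume "z \<in> e" "z \<noteq> oth e"
        then have "z = t e" using of(3) by blast
        then show "z \<in> C" using True by simp
      qed
      ultimately show ?thesis using of(1) by simp
    next
      case False
      then have "s e = t e" unfolding s_def by simp
      moreover have "oth e \<in> C"
      proof -
        obtain z where z: "z \<in> e" "z \<in> C" using ne by blast
        then have "z \<noteq> t e" using False by blast
        then have "z = oth e" using of(3) z(1) by blast
        then show ?thesis using z(2) by simp
      qed
      moreover have "\<forall>z\<in>e. z \<noteq> t e \<longrightarrow> z \<in> C"
      proof (intro ballI impI)
        fix z assume "z \<in> e" "z \<noteq> t e"
        then have "z = oth e" using of(3) by blast
        then show "z \<in> C" using \<open>oth e \<in> C\<close> by simp
      qed
      ultimately show ?thesis using te by simp
    qed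
  qed
  define C' where "C' = (\<lambda>u. PV u 2) ` V \<union> (\<lambda>u. PV u 3) ` C \<union> EW ` E \<union> (\<lambda>e. EVx e (s e)) ` E"
  have "card C' \<le> card V + card C + card E + card E"
  proof -
    have "card C' \<le> card ((\<lambda>u. PV u 2) ` V \<union> (\<lambda>u. PV u 3) ` C \<union> EW ` E) + card ((\<lambda>e. EVx e (s e)) ` E)"
      unfolding C'_def by (rule card_Un_le)
    also have "\<dots> \<le> card ((\<lambda>u. PV u 2) ` V \<union> (\<lambda>u. PV u 3) ` C) + card (EW ` E) + card ((\<lambda>e. EVx e (s e)) ` E)"
      using card_Un_le[of "(\<lambda>u. PV u 2) ` V \<union> (\<lambda>u. PV u 3) ` C" "EW ` E"] by linarith
    also have "\<dots> \<le> card ((\<lambda>u. PV u 2) ` V) + card ((\<lambda>u. PV u 3) ` C) + card (EW ` E) + card ((\<lambda>e. EVx e (s e)) ` E)"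
      using card_Un_le[of "(\<lambda>u. PV u 2) ` V" "(\<lambda>u. PV u 3) ` C"] by linarith
    also have "\<dots> \<le> card V + card C + card E + card E"
      using card_image_le[OF fV, of "\<lambda>u. PV u 2"] card_image_le[OF fC, of "\<lambda>u. PV u 3"]
        card_image_le[OF fE, of EW] card_image_le[OF fE, of "\<lambda>e. EVx e (s e)"] by linarith
    finally show ?thesis .
  qed
  then have card: "int (card C') \<le> 2 * int (card V + card E) - int k" using assms(4) by simp
  have subV: "C' \<subseteq> red_vertices V E"
  proof
    fix w assume "w \<in> C'"
    then consider (a) u where "u \<in> V" "w = PV u 2" | (b) u where "u \<in> C" "w = PV u 3"
      | (c) e where "e \<in> E" "w = EW e" | (d) e where "e \<in> E" "w = EVx e (s e)"
      unfolding C'_def by blast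
    then show "w \<in> red_vertices V E"
    proof cases
      case a then show ?thesis unfolding red_vertices_def by blast
    next
      case b then have "u \<in> V" using CV by blast
      then show ?thesis using b unfolding red_vertices_def by blast
    next
      case c then show ?thesis unfolding red_vertices_def by blast
    next
      case d then have "s e \<in> e" using sfacts by blast
      then show ?thesis using d unfolding red_vertices_def by blast
    qed
  qed
  have cov: "f \<inter> C' \<noteq> {}" if "f \<in> red_edges V E" for f
  proof -
    from that consider
        (a) u where "u \<in> V" "f = {PV u 1, PV u 2}"
      | (b) u where "u \<in> V" "f = {PV u 2, PV u 3}"
      | (c) e x y where "e \<in> E" "x \<noteq> y" "e = {x,y}" "f = {EVx e x, EVx e y}"
      | (d) e x where "e \<in> E" "x \<in> e" "f = {EVx e x, EW e}"
      | (e) e where "e \<in> E" "f = {EW e, EZ e}"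
      | (g) e x where "e \<in> E" "x \<in> e" "f = {PV x 3, EVx e x}"
        unfolding red_edges_def by blast
    then show ?thesis
    proof cases
      case a
      then have "PV u 2 \<in> f \<inter> C'" unfolding C'_def by simp
      then show ?thesis by blast
    next
      case b
      then have "PV u 2 \<in> f \<inter> C'" unfolding C'_def by simp
      then show ?thesis by blast
    next
      case c
      then have "s e \<in> {x,y}" using sfacts by blast
      then have "EVx e (s e) \<in> f" using c by auto
      moreover have "EVx e (s e) \<in> C'" unfolding C'_def using c by blast
      ultimately show ?thesis by blast
    next
      case d
      then have "EW e \<in> f \<inter> C'" unfolding C'_def by simp
      then show ?thesis by blast
    next
      case e
      then have "EW e \<in> f \<inter> C'" unfolding C'_def by simp
      then show ?thesis by blast
    next
      case g
      show ?thesis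
      proof (cases "x = s e")
        case True
        then have "EVx e x \<in> f \<inter> C'" unfolding C'_def using g by simp
        then show ?thesis by blast
      next
        case False
        then have "x \<in> C" using sfacts g by blast
        then have "PV x 3 \<in> f \<inter> C'" unfolding C'_def using g by simp
        then show ?thesis by blast
      qed
    qed
  qed
  show ?thesis using card subV cov unfolding vertex_cover_def by blast
qed


lemma re1: "u \<in> V \<Longrightarrow> {PV u 1, PV u 2} \<in> red_edges V E"
  unfolding red_edges_def by blast
lemma re3: "e \<in> E \<Longrightarrow> x \<noteq> y \<Longrightarrow> e = {x,y} \<Longrightarrow> {EVx e x, EVx e y} \<in> red_edges V E"
  unfolding red_edges_def by (intro UnI1 UnI2 CollectI) (intro exI conjI, rule refl, assumption+)
lemma re4: "e \<in> E \<Longrightarrow> x \<in> e \<Longrightarrow> {EVx e x, EW e} \<in> red_edges V E"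
  unfolding red_edges_def by blast
lemma re5: "e \<in> E \<Longrightarrow> {EW e, EZ e} \<in> red_edges V E"
  unfolding red_edges_def by blast
lemma re6: "e \<in> E \<Longrightarrow> x \<in> e \<Longrightarrow> {PV x 3, EVx e x} \<in> red_edges V E"
  unfolding red_edges_def by blast

lemma card_two_elems: "a \<noteq> b \<Longrightarrow> {a, b} \<subseteq> X \<Longrightarrow> finite X \<Longrightarrow> 2 \<le> card X"
  using card_mono[of X "{a,b}"] by simp
lemma card_three_elems: "a \<noteq> b \<Longrightarrow> a \<noteq> c \<Longrightarrow> b \<noteq> c \<Longrightarrow> {a, b, c} \<subseteq> X \<Longrightarrow> finite X \<Longrightarrow> 3 \<le> card X"
  using card_mono[of X "{a,b,c}"] by simp

lemma part4b:
  assumes "graph V E" "\<forall>e\<in>E. t e \<in> e"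
    and cov: "vertex_cover (red_vertices V E) (red_edges V E) C'"
    and ccard: "int (card C') \<le> 2 * int (card V + card E) - int k"
  shows "\<exists>C. vertex_cover V E C \<and> int (card C) \<le> int (card V) - int k"
proof -
  have fV: "finite V" and fE: "finite E" and sub: "E \<subseteq> Pow V" using graph_facts[OF assms(1)] by auto
  have edg: "\<And>e. e \<in> E \<Longrightarrow> \<exists>x y. x \<noteq> y \<and> x \<in> V \<and> y \<in> V \<and> e = {x, y}"
    using graph_facts(4)[OF assms(1)] by blast
  have C'sub: "C' \<subseteq> red_vertices V E" and C'cov: "\<And>f. f \<in> red_edges V E \<Longrightarrow> f \<inter> C' \<noteq> {}"
    using cov unfolding vertex_cover_def by auto
  define pv where "pv u = {PV u 1, PV u 2, PV u 3}" for u :: 'a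
  define gd where "gd e = insert (EW e) (insert (EZ e) (EVx e ` e))" for e :: "'a set"
  have fpv: "finite (pv u)" for u unfolding pv_def by simp
  have fgd: "finite (gd e)" if "e \<in> E" for e
  proof -
    have "finite e" using that sub fV finite_subset by blast
    then show ?thesis unfolding gd_def by simp
  qed
  have rv: "red_vertices V E \<subseteq> (\<Union>u\<in>V. pv u) \<union> (\<Union>e\<in>E. gd e)"
  proof
    fix w assume "w \<in> red_vertices V E"
    then consider (a) u i where "u \<in> V" "i \<in> {1,2,3}" "w = PV u i"
      | (b) e x where "e \<in> E" "x \<in> e" "w = EVx e x" | (c) e where "e \<in> E" "w = EW e"
      | (d) e where "e \<in> E" "w = EZ e"
      unfolding red_vertices_def by blast
    then show "w \<in> (\<Union>u\<in>V. pv u) \<union> (\<Union>e\<in>E. gd e)"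
    proof cases
      case a then have "w \<in> pv u" unfolding pv_def by auto
      then show ?thesis using a(1) by blast
    next
      case b then have "w \<in> gd e" unfolding gd_def by simp
      then show ?thesis using b(1) by blast
    next
      case c then have "w \<in> gd e" unfolding gd_def by simp
      then show ?thesis using c(1) by blast
    next
      case d then have "w \<in> gd e" unfolding gd_def by simp
      then show ?thesis using d(1) by blast
    qed
  qed
  have "C' = C' \<inter> ((\<Union>u\<in>V. pv u) \<union> (\<Union>e\<in>E. gd e))" using C'sub rv by blast
  then have C'eq: "C' = (\<Union>u\<in>V. C' \<inter> pv u) \<union> (\<Union>e\<in>E. C' \<inter> gd e)"
    by (simp only: Int_Un_distrib Int_UN_distrib)
  have pg: "pv u \<inter> gd e = {}" for u e unfolding pv_def gd_def by auto
  have d1: "(\<Union>u\<in>V. C' \<inter> pv u) \<inter> (\<Union>e\<in>E. C' \<inter> gd e) = {}"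
    using pg by blast
  have f1: "finite (\<Union>u\<in>V. C' \<inter> pv u)" using fV fpv by simp
  have f2: "finite (\<Union>e\<in>E. C' \<inter> gd e)" using fE fgd by simp
  have s1: "card (\<Union>u\<in>V. C' \<inter> pv u) = (\<Sum>u\<in>V. card (C' \<inter> pv u))"
    by (rule card_UN_disjoint[OF fV]) (simp_all add: fpv pv_def, blast)
  have s2: "card (\<Union>e\<in>E. C' \<inter> gd e) = (\<Sum>e\<in>E. card (C' \<inter> gd e))"
  proof (rule card_UN_disjoint[OF fE])
    show "\<forall>e\<in>E. finite (C' \<inter> gd e)" using fgd by blast
    show "\<forall>e\<in>E. \<forall>d\<in>E. e \<noteq> d \<longrightarrow> C' \<inter> gd e \<inter> (C' \<inter> gd d) = {}"
      unfolding gd_def by blast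
  qed
  have cardC': "card C' = (\<Sum>u\<in>V. card (C' \<inter> pv u)) + (\<Sum>e\<in>E. card (C' \<inter> gd e))"
    using card_Un_disjoint[OF f1 f2 d1] C'eq s1 s2 by simp
  define A where "A = {u \<in> V. PV u 3 \<in> C'}"
  define B where "B = {e \<in> E. \<forall>x\<in>e. PV x 3 \<notin> C'}"
  have lbV: "(if u \<in> A then 2 else 1) \<le> card (C' \<inter> pv u)" if uV: "u \<in> V" for u
  proof -
    have "{PV u 1, PV u 2} \<in> red_edges V E" using re1[OF uV] .
    from C'cov[OF this] obtain w where w: "w \<in> C'" "w = PV u 1 \<or> w = PV u 2" by blast
    have wp: "w \<in> C' \<inter> pv u" using w unfolding pv_def by auto
    show ?thesis
    proof (cases "u \<in> A")
      case True
      then have "PV u 3 \<in> C' \<inter> pv u" unfolding A_def pv_def by simp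
      moreover have "w \<noteq> PV u 3" using w by auto
      ultimately have "2 \<le> card (C' \<inter> pv u)"
        using card_two_elems[of w "PV u 3" "C' \<inter> pv u"] wp fpv by blast
      then show ?thesis using True by simp
    next
      case False
      have "C' \<inter> pv u \<noteq> {}" using wp by blast
      then have "1 \<le> card (C' \<inter> pv u)" using fpv by (simp add: Suc_le_eq card_gt_0_iff)
      then show ?thesis using False by simp
    qed
  qed
  have lbE: "(if e \<in> B then 3 else 2) \<le> card (C' \<inter> gd e)" if eE: "e \<in> E" for e
  proof -
    obtain x y where xy: "x \<noteq> y" "e = {x,y}" using edg[OF eE] by blast
    have xe: "x \<in> e" "y \<in> e" using xy(2) by simp_all
    have fin: "finite (C' \<inter> gd e)" using fgd[OF eE] by simp
    have e1: "{EVx e x, EVx e y} \<in> red_edges V E" using re3[OF eE xy] .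
    have e2: "{EVx e x, EW e} \<in> red_edges V E" using re4[OF eE xe(1)] .
    have e3: "{EVx e y, EW e} \<in> red_edges V E" using re4[OF eE xe(2)] .
    have e4: "{EW e, EZ e} \<in> red_edges V E" using re5[OF eE] .
    have inx: "EVx e x \<in> gd e" "EVx e y \<in> gd e" "EW e \<in> gd e" "EZ e \<in> gd e"
      unfolding gd_def using xe by simp_all
    have c1: "EVx e x \<in> C' \<or> EVx e y \<in> C'" using C'cov[OF e1] by blast
    have c2: "EVx e x \<in> C' \<or> EW e \<in> C'" using C'cov[OF e2] by blast
    have c3: "EVx e y \<in> C' \<or> EW e \<in> C'" using C'cov[OF e3] by blast
    have c4: "EZ e \<in> C' \<or> EW e \<in> C'" using C'cov[OF e4] by blast
    have two: "2 \<le> card (C' \<inter> gd e)"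
    proof (cases "EW e \<in> C'")
      case True
      then show ?thesis
      proof (cases "EVx e x \<in> C'")
        case True
        then show ?thesis using card_two_elems[of "EVx e x" "EW e" "C' \<inter> gd e"] \<open>EW e \<in> C'\<close> inx fin by simp
      next
        case False
        then have "EVx e y \<in> C'" using c1 by blast
        then show ?thesis using card_two_elems[of "EVx e y" "EW e" "C' \<inter> gd e"] \<open>EW e \<in> C'\<close> inx fin by simp
      qed
    next
      case False
      then have "EVx e x \<in> C'" "EVx e y \<in> C'" using c2 c3 by auto
      then show ?thesis using card_two_elems[of "EVx e x" "EVx e y" "C' \<inter> gd e"] inx fin xy(1) by simp
    qed
    show ?thesis
    proof (cases "e \<in> B")
      case True
      then have n3: "PV x 3 \<notin> C'" "PV y 3 \<notin> C'" unfolding B_def using xe by auto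
      have "{PV x 3, EVx e x} \<inter> C' \<noteq> {}" "{PV y 3, EVx e y} \<inter> C' \<noteq> {}"
        using C'cov[OF re6[OF eE xe(1)]] C'cov[OF re6[OF eE xe(2)]] by auto
      then have "EVx e x \<in> C'" "EVx e y \<in> C'" using n3 by auto
      then have "3 \<le> card (C' \<inter> gd e)"
      proof (cases "EW e \<in> C'")
        case True
        then show ?thesis using card_three_elems[of "EVx e x" "EVx e y" "EW e" "C' \<inter> gd e"]
          \<open>EVx e x \<in> C'\<close> \<open>EVx e y \<in> C'\<close> inx fin xy(1) by simp
      next
        case False
        then have "EZ e \<in> C'" using c4 by blast
        then show ?thesis using card_three_elems[of "EVx e x" "EVx e y" "EZ e" "C' \<inter> gd e"]
          \<open>EVx e x \<in> C'\<close> \<open>EVx e y \<in> C'\<close> inx fin xy(1) by simp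
      qed
      then show ?thesis using True by simp
    next
      case False
      then show ?thesis using two by simp
    qed
  qed
  have AV: "A \<subseteq> V" unfolding A_def by blast
  have BE: "B \<subseteq> E" unfolding B_def by blast
  have fA: "finite A" using finite_subset[OF AV fV] .
  have fB: "finite B" using finite_subset[OF BE fE] .
  have sumV: "(\<Sum>u\<in>V. (if u \<in> A then 2 else 1::nat)) = card V + card A"
  proof -
    have "(\<Sum>u\<in>V. (if u \<in> A then 2 else 1::nat)) = (\<Sum>u\<in>V. 1 + (if u \<in> A then 1 else 0))"
      by (rule sum.cong) auto
    also have "\<dots> = card V + (\<Sum>u\<in>V. (if u \<in> A then 1 else 0::nat))"
      by (subst sum.distrib) simp
    also have "(\<Sum>u\<in>V. (if u \<in> A then 1 else 0::nat)) = card (V \<inter> A)"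
      using fV by (simp add: sum.If_cases)
    also have "V \<inter> A = A" using AV by blast
    finally show ?thesis .
  qed
  have sumE: "(\<Sum>e\<in>E. (if e \<in> B then 3 else 2::nat)) = 2 * card E + card B"
  proof -
    have "(\<Sum>e\<in>E. (if e \<in> B then 3 else 2::nat)) = (\<Sum>e\<in>E. 2 + (if e \<in> B then 1 else 0))"
      by (rule sum.cong) auto
    also have "\<dots> = 2 * card E + (\<Sum>e\<in>E. (if e \<in> B then 1 else 0::nat))"
      by (subst sum.distrib) simp
    also have "(\<Sum>e\<in>E. (if e \<in> B then 1 else 0::nat)) = card (E \<inter> B)"
      using fE by (simp add: sum.If_cases)
    also have "E \<inter> B = B" using BE by blast
    finally show ?thesis .
  qed
  have "card V + card A \<le> (\<Sum>u\<in>V. card (C' \<inter> pv u))"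
    using sum_mono[of V "\<lambda>u. (if u \<in> A then 2 else 1::nat)" "\<lambda>u. card (C' \<inter> pv u)"] lbV sumV by simp
  moreover have "2 * card E + card B \<le> (\<Sum>e\<in>E. card (C' \<inter> gd e))"
    using sum_mono[of E "\<lambda>e. (if e \<in> B then 3 else 2::nat)" "\<lambda>e. card (C' \<inter> gd e)"] lbE sumE by simp
  ultimately have big: "card V + card A + 2 * card E + card B \<le> card C'" using cardC' by linarith
  define C where "C = A \<union> t ` B"
  have "card C \<le> card A + card (t ` B)" unfolding C_def by (rule card_Un_le)
  also have "\<dots> \<le> card A + card B" using card_image_le[OF fB, of t] by simp
  finally have cC: "card C \<le> card A + card B" .
  have vc: "vertex_cover V E C"
    unfolding vertex_cover_def
  proof
    show "C \<subseteq> V"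
    proof
      fix z assume "z \<in> C"
      then consider "z \<in> A" | e where "e \<in> B" "z = t e" unfolding C_def by blast
      then show "z \<in> V"
      proof cases
        case 1 then show ?thesis using AV by blast
      next
        case 2 then have "e \<in> E" using BE by blast
        then have "t e \<in> e" "e \<subseteq> V" using assms(2) sub by blast+
        then show ?thesis using 2 by blast
      qed
    qed
    show "\<forall>e\<in>E. e \<inter> C \<noteq> {}"
    proof
      fix e assume eE: "e \<in> E"
      show "e \<inter> C \<noteq> {}"
      proof (cases "e \<in> B")
        case True
        then have "t e \<in> e \<inter> C" using assms(2) eE unfolding C_def by blast
        then show ?thesis by blast
      next
        case False
        then obtain x where "x \<in> e" "PV x 3 \<in> C'" using eE unfolding B_def by blast
        moreover have "e \<subseteq> V" using eE sub by blast
        ultimately have "x \<in> e \<inter> C" unfolding C_def A_def by blast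
        then show ?thesis by blast
      qed
    qed
  qed
  have "int (card C) \<le> int (card V) - int k" using cC big ccard by simp
  then show ?thesis using vc by blast
qed


theorem mainTheorem10:
  fixes V :: "'a set" and E :: "'a set set" and t :: "'a set \<Rightarrow> 'a" and k :: nat
  assumes "graph V E"
    and "\<forall>e\<in>E. t e \<in> e"
    and "k > 0"
  shows "maximal_matching (red_edges V E) (red_matching V E t)
       \<and> card (red_matching V E t) = card V + card E
       \<and> ((\<exists>S. independent_set V E S \<and> card S \<ge> k)
            \<longleftrightarrow> (\<exists>C. vertex_cover V E C \<and> int (card C) \<le> int (card V) - int k))
       \<and> ((\<exists>S. independent_set V E S \<and> card S \<ge> k)
            \<longleftrightarrow> (\<exists>C. vertex_cover (red_vertices V E) (red_edges V E) C
                     \<and> int (card C) \<le> 2 * int (card (red_matching V E t)) - int k))"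
proof -
  have p2: "card (red_matching V E t) = card V + card E" using part2[OF assms(1,2)] .
  have p3: "(\<exists>S. independent_set V E S \<and> card S \<ge> k)
            \<longleftrightarrow> (\<exists>C. vertex_cover V E C \<and> int (card C) \<le> int (card V) - int k)"
    using part3[OF assms(1)] .
  have p4: "(\<exists>C. vertex_cover V E C \<and> int (card C) \<le> int (card V) - int k)
       \<longleftrightarrow> (\<exists>C. vertex_cover (red_vertices V E) (red_edges V E) C
                     \<and> int (card C) \<le> 2 * int (card V + card E) - int k)"
  proof
    assume "\<exists>C. vertex_cover V E C \<and> int (card C) \<le> int (card V) - int k"
    then obtain C where "vertex_cover V E C" "int (card C) \<le> int (card V) - int k" by blast
    then show "\<exists>C. vertex_cover (red_vertices V E) (red_edges V E) C
                     \<and> int (card C) \<le> 2 * int (card V + card E) - int k"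
      using part4a[OF assms(1,2)] by blast
  next
    assume "\<exists>C. vertex_cover (red_vertices V E) (red_edges V E) C
                     \<and> int (card C) \<le> 2 * int (card V + card E) - int k"
    then obtain C' where "vertex_cover (red_vertices V E) (red_edges V E) C'"
      "int (card C') \<le> 2 * int (card V + card E) - int k" by blast
    then show "\<exists>C. vertex_cover V E C \<and> int (card C) \<le> int (card V) - int k"
      using part4b[OF assms(1,2)] by blast
  qed
  show ?thesis using part1[OF assms(1,2)] p2 p3 p4 by simp
qed

end
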